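(* Let $R$ be a commutative ring with identity. Then the cozero-divisor graph $\Gamma'(R)$ is outerplanar if and only if $\Gamma''_I(R)$ is outerplanar for every ideal $I$ of $R$.
   Context: $\Gamma'(R)$ is the simple undirected graph whose vertices are the nonzero non-unit elements of $R$, with distinct vertices $x,y$ adjacent if and only if $x\notin yR$ and $y\notin xR$. For an ideal $I$ of $R$, $\Gamma''_I(R)$ is the simple undirected graph whose vertex set is $\{x\in R\setminus I : xR+I\neq R\}$, with distinct vertices $x,y$ adjacent if and only if $x\notin yR+I$ and $y\notin xR+I$. A graph is outerplanar if it can be drawn in the plane without crossings so that all vertices lie on the unbounded face. *)

theory Defs
  imports "HOL-Analysis.Analysis"
begin

definition is_ideal :: "'a::comm_ring_1 set \<Rightarrow> bool" where
  "is_ideal I \<longleftrightarrow> 0 \<in> I \<and> (\<forall>a\<in>I. \<forall>b\<in>I. a + b \<in> I) \<and> (\<forall>a\<in>I. - a \<in> I)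
     \<and> (\<forall>a\<in>I. \<forall>r. r * a \<in> I)"

definition principal :: "'a::comm_ring_1 \<Rightarrow> 'a set" where
  "principal x = range (\<lambda>r. x * r)"

definition principal_plus :: "'a::comm_ring_1 \<Rightarrow> 'a set \<Rightarrow> 'a set" where
  "principal_plus x I = {a + b | a b. a \<in> principal x \<and> b \<in> I}"

definition cozero_V :: "'a::comm_ring_1 set" where
  "cozero_V = {x. x \<noteq> 0 \<and> \<not> x dvd 1}"

definition cozero_E :: "'a::comm_ring_1 \<Rightarrow> 'a \<Rightarrow> bool" where
  "cozero_E x y \<longleftrightarrow> x \<noteq> y \<and> x \<notin> principal y \<and> y \<notin> principal x"

definition cozero_I_V :: "'a::comm_ring_1 set \<Rightarrow> 'a set" where
  "cozero_I_V I = {x. x \<notin> I \<and> principal_plus x I \<noteq> UNIV}"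

definition cozero_I_E :: "'a::comm_ring_1 set \<Rightarrow> 'a \<Rightarrow> 'a \<Rightarrow> bool" where
  "cozero_I_E I x y \<longleftrightarrow> x \<noteq> y \<and> x \<notin> principal_plus y I \<and> y \<notin> principal_plus x I"

text \<open>Outerplanarity of the simple graph with vertex set V and (symmetric, irreflexive)
  adjacency E, via drawings in the plane (identified with the complex numbers):
  vertices are distinct points, each edge is an arc joining its end points, which meets
  the vertex points only in its end points, distinct edges meet only in common end points,
  and every vertex lies on the boundary of the unbounded face (the outside of the drawing).\<close>
definition outerplanar :: "'v set \<Rightarrow> ('v \<Rightarrow> 'v \<Rightarrow> bool) \<Rightarrow> bool" where
  "outerplanar V E \<longleftrightarrow>
    (\<exists>(p :: 'v \<Rightarrow> complex) (\<gamma> :: 'v \<Rightarrow> 'v \<Rightarrow> real \<Rightarrow> complex).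
       inj_on p V \<and>
       (\<forall>u\<in>V. \<forall>v\<in>V. E u v \<longrightarrow>
          arc (\<gamma> u v) \<and> pathstart (\<gamma> u v) = p u \<and> pathfinish (\<gamma> u v) = p v \<and>
          path_image (\<gamma> v u) = path_image (\<gamma> u v) \<and>
          path_image (\<gamma> u v) \<inter> p ` V = {p u, p v}) \<and>
       (\<forall>u\<in>V. \<forall>v\<in>V. \<forall>x\<in>V. \<forall>y\<in>V. E u v \<longrightarrow> E x y \<longrightarrow> {u, v} \<noteq> {x, y} \<longrightarrow>
          path_image (\<gamma> u v) \<inter> path_image (\<gamma> x y) \<subseteq> p ` ({u, v} \<inter> {x, y})) \<and>
       (let D = p ` V \<union> (\<Union>u\<in>V. \<Union>v\<in>{v\<in>V. E u v}. path_image (\<gamma> u v))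
        in \<forall>v\<in>V. p v \<in> closure (outside D)))"

end

theory Submission
  imports Defs
begin

lemma outerplanar_mono:
  assumes op: "outerplanar V E" and sub: "V' \<subseteq> V"
    and EE: "\<And>u v. u \<in> V' \<Longrightarrow> v \<in> V' \<Longrightarrow> E' u v \<Longrightarrow> E u v"
  shows "outerplanar V' E'"
proof -
  obtain p :: "_ \<Rightarrow> complex" and \<gamma> where
    inj: "inj_on p V" and
    ed: "\<forall>u\<in>V. \<forall>v\<in>V. E u v \<longrightarrow>
          arc (\<gamma> u v) \<and> pathstart (\<gamma> u v) = p u \<and> pathfinish (\<gamma> u v) = p v \<and>
          path_image (\<gamma> v u) = path_image (\<gamma> u v) \<and>
          path_image (\<gamma> u v) \<inter> p ` V = {p u, p v}" and
    dis: "\<forall>u\<in>V. \<forall>v\<in>V. \<forall>x\<in>V. \<forall>y\<in>V. E u v \<longrightarrow> E x y \<longrightarrow> {u, v} \<noteq> {x, y} \<longrightarrow>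
          path_image (\<gamma> u v) \<inter> path_image (\<gamma> x y) \<subseteq> p ` ({u, v} \<inter> {x, y})" and
    out: "\<forall>v\<in>V. p v \<in> closure (outside (p ` V \<union> (\<Union>u\<in>V. \<Union>v\<in>{v\<in>V. E u v}. path_image (\<gamma> u v))))"
    using op unfolding outerplanar_def Let_def by (elim exE conjE) (rule that; assumption)
  have D: "p ` V' \<union> (\<Union>u\<in>V'. \<Union>v\<in>{v\<in>V'. E' u v}. path_image (\<gamma> u v))
       \<subseteq> p ` V \<union> (\<Union>u\<in>V. \<Union>v\<in>{v\<in>V. E u v}. path_image (\<gamma> u v))"
    apply (rule Un_mono)
    using sub apply blast
    apply (rule UN_mono, rule sub, rule UN_mono)
    using sub EE by auto
  have out': "\<forall>v\<in>V'. p v \<in> closure (outside (p ` V' \<union> (\<Union>u\<in>V'. \<Union>v\<in>{v\<in>V'. E' u v}. path_image (\<gamma> u v))))"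
  proof
    fix v assume "v \<in> V'"
    then have "v \<in> V" using sub by blast
    then have "p v \<in> closure (outside (p ` V \<union> (\<Union>u\<in>V. \<Union>v\<in>{v\<in>V. E u v}. path_image (\<gamma> u v))))"
      using out by blast
    then show "p v \<in> closure (outside (p ` V' \<union> (\<Union>u\<in>V'. \<Union>v\<in>{v\<in>V'. E' u v}. path_image (\<gamma> u v))))"
      using closure_mono[OF outside_mono[OF D]] by (rule subsetD[rotated])
  qed
  have ed': "\<forall>u\<in>V'. \<forall>v\<in>V'. E' u v \<longrightarrow>
          arc (\<gamma> u v) \<and> pathstart (\<gamma> u v) = p u \<and> pathfinish (\<gamma> u v) = p v \<and>
          path_image (\<gamma> v u) = path_image (\<gamma> u v) \<and>
          path_image (\<gamma> u v) \<inter> p ` V' = {p u, p v}"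
  proof (intro ballI impI)
    fix u v assume u: "u \<in> V'" and v: "v \<in> V'" and e: "E' u v"
    have uv: "u \<in> V" "v \<in> V" "E u v" using u v e sub EE by auto
    then have h: "arc (\<gamma> u v) \<and> pathstart (\<gamma> u v) = p u \<and> pathfinish (\<gamma> u v) = p v \<and>
          path_image (\<gamma> v u) = path_image (\<gamma> u v) \<and>
          path_image (\<gamma> u v) \<inter> p ` V = {p u, p v}" using ed by blast
    have "p u \<in> path_image (\<gamma> u v)" "p v \<in> path_image (\<gamma> u v)"
      using h pathstart_in_path_image pathfinish_in_path_image by metis+
    then have "path_image (\<gamma> u v) \<inter> p ` V' = {p u, p v}"
      using h sub u v by blast
    then show "arc (\<gamma> u v) \<and> pathstart (\<gamma> u v) = p u \<and> pathfinish (\<gamma> u v) = p v \<and>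
          path_image (\<gamma> v u) = path_image (\<gamma> u v) \<and>
          path_image (\<gamma> u v) \<inter> p ` V' = {p u, p v}" using h by blast
  qed
  have dis': "\<forall>u\<in>V'. \<forall>v\<in>V'. \<forall>x\<in>V'. \<forall>y\<in>V'. E' u v \<longrightarrow> E' x y \<longrightarrow> {u, v} \<noteq> {x, y} \<longrightarrow>
          path_image (\<gamma> u v) \<inter> path_image (\<gamma> x y) \<subseteq> p ` ({u, v} \<inter> {x, y})"
  proof (intro ballI impI)
    fix u v x y assume a: "u \<in> V'" "v \<in> V'" "x \<in> V'" "y \<in> V'" "E' u v" "E' x y" "{u, v} \<noteq> {x, y}"
    then have "u \<in> V" "v \<in> V" "x \<in> V" "y \<in> V" "E u v" "E x y" using sub EE by auto
    then show "path_image (\<gamma> u v) \<inter> path_image (\<gamma> x y) \<subseteq> p ` ({u, v} \<inter> {x, y})"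
      using dis a(7) by blast
  qed
  show ?thesis unfolding outerplanar_def Let_def
    apply (rule exI[of _ p], rule exI[of _ \<gamma>])
    using inj_on_subset[OF inj sub] ed' dis' out' by (intro conjI)
qed

lemma V_sub:
  assumes "is_ideal I"
  shows "cozero_I_V I \<subseteq> (cozero_V :: 'a::comm_ring_1 set)"
proof
  fix x :: 'a assume x: "x \<in> cozero_I_V I"
  have z: "0 \<in> I" using assms unfolding is_ideal_def by blast
  have "x \<noteq> 0" using x z unfolding cozero_I_V_def by auto
  moreover have "\<not> x dvd 1"
  proof
    assume "x dvd 1"
    then obtain r where r: "1 = x * r" by (auto simp: dvd_def)
    have "principal_plus x I = UNIV"
    proof (intro set_eqI iffI)
      fix z :: 'a
      have "z = x * (r * z) + 0" using r by (metis add_0_right mult.assoc mult_1)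
      then show "z \<in> principal_plus x I" unfolding principal_plus_def principal_def
        using z by blast
    qed simp
    then show False using x unfolding cozero_I_V_def by blast
  qed
  ultimately show "x \<in> cozero_V" unfolding cozero_V_def by blast
qed

lemma E_sub:
  assumes "is_ideal I" "cozero_I_E I x y"
  shows "cozero_E (x::'a::comm_ring_1) y"
proof -
  have z: "0 \<in> I" using assms unfolding is_ideal_def by blast
  have "\<And>w. principal w \<subseteq> principal_plus w I"
    unfolding principal_plus_def using z by force
  then show ?thesis using assms(2) unfolding cozero_I_E_def cozero_E_def by blast
qed

lemma ideal0: "is_ideal {0::'a::comm_ring_1}"
  unfolding is_ideal_def by simp

lemma pp0: "principal_plus x {0} = principal (x::'a::comm_ring_1)"
  unfolding principal_plus_def by auto

lemma V0: "cozero_I_V {0} = (cozero_V :: 'a::comm_ring_1 set)"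
proof -
  have "principal x = UNIV \<longleftrightarrow> x dvd 1" for x :: 'a
  proof
    assume "principal x = UNIV"
    then have "1 \<in> principal x" by simp
    then obtain r where "x * r = 1" unfolding principal_def by auto
    then show "x dvd 1" by (metis dvdI)
  next
    assume "x dvd 1"
    then obtain r where r: "1 = x * r" by (auto simp: dvd_def)
    have "z \<in> principal x" for z
    proof -
      have "z = x * (r * z)" using r by (metis mult.assoc mult_1)
      then show ?thesis unfolding principal_def by blast
    qed
    then show "principal x = UNIV" by blast
  qed
  then show ?thesis unfolding cozero_I_V_def cozero_V_def pp0 by auto
qed

lemma E0: "cozero_I_E {0} = (cozero_E :: 'a::comm_ring_1 \<Rightarrow> _)"
  unfolding cozero_I_E_def cozero_E_def pp0 by (intro ext) simp

theorem proposition3p12: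
  shows "outerplanar (cozero_V :: 'a::comm_ring_1 set) cozero_E \<longleftrightarrow>
         (\<forall>I :: 'a set. is_ideal I \<longrightarrow> outerplanar (cozero_I_V I) (cozero_I_E I))"
proof
  assume op: "outerplanar (cozero_V :: 'a set) cozero_E"
  show "\<forall>I :: 'a set. is_ideal I \<longrightarrow> outerplanar (cozero_I_V I) (cozero_I_E I)"
  proof (intro allI impI)
    fix I :: "'a set" assume I: "is_ideal I"
    show "outerplanar (cozero_I_V I) (cozero_I_E I)"
      using outerplanar_mono[OF op V_sub[OF I]] E_sub[OF I] by blast
  qed
next
  assume "\<forall>I :: 'a set. is_ideal I \<longrightarrow> outerplanar (cozero_I_V I) (cozero_I_E I)"
  then have "outerplanar (cozero_I_V {0::'a}) (cozero_I_E {0})" using ideal0 by blast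
  then show "outerplanar (cozero_V :: 'a set) cozero_E" by (simp add: V0 E0)
qed

end
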